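(* Let $F$ be a CNF formula with $n$ variables and clauses $C_1,\dots,C_m$, and let $A_F,B_F\subseteq\{0,1\}^m$ be defined as follows. Partition the variables into a first half $X_1$ and a second half $X_2$. For each assignment $\alpha$ to $X_1$, let $a^\alpha\in\{0,1\}^m$ have $a^\alpha_j=1$ iff $\alpha$ does not satisfy clause $C_j$ (no literal of $C_j$ over $X_1$ is made true by $\alpha$), and let $A_F=\{a^\alpha\}$; define $B_F$ analogously from assignments to $X_2$. Then $F$ is unsatisfiable if and only if there exists a monotone Boolean function $h\colon\{0,1\}^m\to\{0,1\}$ with $A_F\subseteq h^{-1}(1)$ and $\overline{B_F}\subseteq h^{-1}(0)$.
   Context: For $v\in\{0,1\}^m$, $\overline{v}$ is the vector obtained by flipping every coordinate, and $\overline{V}=\{\overline{v}:v\in V\}$. A Boolean function $h$ is monotone if $h(u)\ge h(v)$ whenever $u_i\ge v_i$ for all $i$. *)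

theory Defs
  imports Main
begin

(* A literal is a pair (v, p): variable index v, polarity p (True = positive x_v,
   False = negated x_v). *)
type_synonym literal = "nat \<times> bool"
type_synonym clause = "literal list"
type_synonym cnf = "clause list"

definition well_formed :: "nat \<Rightarrow> cnf \<Rightarrow> bool" where
  "well_formed n F \<longleftrightarrow> (\<forall>C\<in>set F. \<forall>(v,p)\<in>set C. v < n)"

definition lit_true :: "(nat \<Rightarrow> bool) \<Rightarrow> literal \<Rightarrow> bool" where
  "lit_true \<sigma> l \<longleftrightarrow> \<sigma> (fst l) = snd l"

definition satisfiable :: "cnf \<Rightarrow> bool" where
  "satisfiable F \<longleftrightarrow> (\<exists>\<sigma>. \<forall>C\<in>set F. \<exists>l\<in>set C. lit_true \<sigma> l)"

definition X1 :: "nat \<Rightarrow> nat set" where "X1 n = {..<n div 2}"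
definition X2 :: "nat \<Rightarrow> nat set" where "X2 n = {n div 2..<n}"

definition unsat_vec :: "nat set \<Rightarrow> cnf \<Rightarrow> (nat \<Rightarrow> bool) \<Rightarrow> bool list" where
  "unsat_vec X F \<alpha> = map (\<lambda>C. \<not> (\<exists>l\<in>set C. fst l \<in> X \<and> lit_true \<alpha> l)) F"

definition A_F :: "nat \<Rightarrow> cnf \<Rightarrow> bool list set" where
  "A_F n F = {unsat_vec (X1 n) F \<alpha> | \<alpha>. True}"

definition B_F :: "nat \<Rightarrow> cnf \<Rightarrow> bool list set" where
  "B_F n F = {unsat_vec (X2 n) F \<beta> | \<beta>. True}"

definition flip :: "bool list \<Rightarrow> bool list" where
  "flip v = map Not v"

(* h : {0,1}^m -> {0,1} monotone (only its values on lists of length m matter) *)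
definition monotone_on_cube :: "nat \<Rightarrow> (bool list \<Rightarrow> bool) \<Rightarrow> bool" where
  "monotone_on_cube m h \<longleftrightarrow>
     (\<forall>u v. length u = m \<and> length v = m \<and> (\<forall>i<m. v ! i \<le> u ! i) \<longrightarrow> h v \<le> h u)"

end

theory Submission
  imports Defs
begin
lemma len_uv[simp]: "length (unsat_vec X F a) = length F"
  by (simp add: unsat_vec_def)

lemma nth_uv: "j < length F \<Longrightarrow> unsat_vec X F a ! j = (\<not> (\<exists>l\<in>set (F!j). fst l \<in> X \<and> lit_true a l))"
  by (simp add: unsat_vec_def)

lemma nth_flip: "j < length v \<Longrightarrow> flip v ! j = (\<not> v ! j)"
  by (simp add: flip_def)

lemma key:
  assumes wf: "well_formed n F"
  shows "satisfiable F \<longleftrightarrow> (\<exists>\<alpha> \<beta>. \<forall>j<length F. unsat_vec (X1 n) F \<alpha> ! j \<longrightarrow> flip (unsat_vec (X2 n) F \<beta>) ! j)"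
proof
  assume "satisfiable F"
  then obtain \<sigma> where s: "\<forall>C\<in>set F. \<exists>l\<in>set C. lit_true \<sigma> l" by (auto simp: satisfiable_def)
  have "\<forall>j<length F. unsat_vec (X1 n) F \<sigma> ! j \<longrightarrow> flip (unsat_vec (X2 n) F \<sigma>) ! j"
  proof (intro allI impI)
    fix j assume j: "j < length F" and u: "unsat_vec (X1 n) F \<sigma> ! j"
    have "F!j \<in> set F" using j by simp
    then obtain l where l: "l \<in> set (F!j)" "lit_true \<sigma> l" using s by blast
    have "\<forall>(v,p)\<in>set (F!j). v < n" using wf \<open>F!j \<in> set F\<close> unfolding well_formed_def by blast
    then have "fst l < n" using l(1) by (cases l) auto
    moreover have "\<not> (\<exists>l\<in>set (F!j). fst l \<in> X1 n \<and> lit_true \<sigma> l)" using u nth_uv[OF j] by simp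
    then have "fst l \<notin> X1 n" using l by blast
    ultimately have "fst l \<in> X2 n" by (auto simp: X1_def X2_def)
    then show "flip (unsat_vec (X2 n) F \<sigma>) ! j" unfolding nth_flip[OF len_uv[symmetric, THEN subst, of "\<lambda>x. j < x", OF j]] nth_uv[OF j] using l by blast
  qed
  then show "\<exists>\<alpha> \<beta>. \<forall>j<length F. unsat_vec (X1 n) F \<alpha> ! j \<longrightarrow> flip (unsat_vec (X2 n) F \<beta>) ! j" by blast
next
  assume "\<exists>\<alpha> \<beta>. \<forall>j<length F. unsat_vec (X1 n) F \<alpha> ! j \<longrightarrow> flip (unsat_vec (X2 n) F \<beta>) ! j"
  then obtain \<alpha> \<beta> where ab: "\<forall>j<length F. unsat_vec (X1 n) F \<alpha> ! j \<longrightarrow> flip (unsat_vec (X2 n) F \<beta>) ! j" by blast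
  define \<sigma> where "\<sigma> = (\<lambda>v. if v < n div 2 then \<alpha> v else \<beta> v)"
  have "\<forall>C\<in>set F. \<exists>l\<in>set C. lit_true \<sigma> l"
  proof
    fix C assume "C \<in> set F"
    then obtain j where j: "j < length F" "C = F!j" by (auto simp: in_set_conv_nth)
    show "\<exists>l\<in>set C. lit_true \<sigma> l"
    proof (cases "unsat_vec (X1 n) F \<alpha> ! j")
      case True
      have "flip (unsat_vec (X2 n) F \<beta>) ! j" using ab[rule_format, OF j(1) True] .
      then have "\<not> unsat_vec (X2 n) F \<beta> ! j" using nth_flip[of j "unsat_vec (X2 n) F \<beta>"] j(1) by simp
      then have "\<exists>l\<in>set (F!j). fst l \<in> X2 n \<and> lit_true \<beta> l" using nth_uv[OF j(1), of "X2 n" \<beta>] by simp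
      then obtain l where l: "l \<in> set C" "fst l \<in> X2 n" "lit_true \<beta> l" using j(2) by blast
      have "lit_true \<sigma> l" using l(2,3) unfolding \<sigma>_def X2_def lit_true_def by simp
      then show ?thesis using l(1) by blast
    next
      case False
      then have "\<exists>l\<in>set (F!j). fst l \<in> X1 n \<and> lit_true \<alpha> l" using nth_uv[OF j(1), of "X1 n" \<alpha>] by simp
      then obtain l where l: "l \<in> set C" "fst l \<in> X1 n" "lit_true \<alpha> l" using j(2) by blast
      have "lit_true \<sigma> l" using l(2,3) unfolding \<sigma>_def X1_def lit_true_def by simp
      then show ?thesis using l(1) by blast
    qed
  qed
  then show "satisfiable F" by (auto simp: satisfiable_def)
qed

lemma mono_h:
  "monotone_on_cube m (\<lambda>u. \<not> (\<exists>b\<in>B. \<forall>i<m. u ! i \<longrightarrow> flip b ! i))"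
  unfolding monotone_on_cube_def
proof (intro allI impI)
  fix u v :: "bool list"
  assume H: "length u = m \<and> length v = m \<and> (\<forall>i<m. v ! i \<le> u ! i)"
  show "(\<not> (\<exists>b\<in>B. \<forall>i<m. v ! i \<longrightarrow> flip b ! i)) \<le> (\<not> (\<exists>b\<in>B. \<forall>i<m. u ! i \<longrightarrow> flip b ! i))"
  proof (rule le_boolI)
    assume hv: "\<not> (\<exists>b\<in>B. \<forall>i<m. v ! i \<longrightarrow> flip b ! i)"
    show "\<not> (\<exists>b\<in>B. \<forall>i<m. u ! i \<longrightarrow> flip b ! i)"
    proof
      assume ex: "\<exists>b\<in>B. \<forall>i<m. u ! i \<longrightarrow> flip b ! i"
      from ex obtain b where b1: "b \<in> B" and b2: "\<forall>i<m. u ! i \<longrightarrow> flip b ! i" ..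
      have "\<forall>i<m. v ! i \<longrightarrow> flip b ! i"
      proof (intro allI impI)
        fix i assume i: "i < m" and vi: "v ! i"
        have "v ! i \<longrightarrow> u ! i" using H i by (simp add: le_bool_def)
        then have "u ! i" using vi by (rule mp)
        then show "flip b ! i" using b2 i by simp
      qed
      then show False using hv b1 by auto
    qed
  qed
qed

theorem lemma18:
  fixes n :: nat and F :: cnf
  assumes "well_formed n F"
  shows "\<not> satisfiable F \<longleftrightarrow>
    (\<exists>h. monotone_on_cube (length F) h \<and>
         (\<forall>a\<in>A_F n F. h a) \<and>
         (\<forall>b\<in>B_F n F. \<not> h (flip b)))"
proof
  assume ns: "\<not> satisfiable F"
  define h where "h = (\<lambda>u. \<not> (\<exists>b\<in>B_F n F. \<forall>i<length F. u ! i \<longrightarrow> flip b ! i))"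
  have "monotone_on_cube (length F) h"
    unfolding h_def by (rule mono_h)
  moreover have "\<forall>a\<in>A_F n F. h a"
  proof
    fix a assume "a \<in> A_F n F"
    then obtain \<alpha> where a: "a = unsat_vec (X1 n) F \<alpha>" unfolding A_F_def by blast
    show "h a"
    proof (rule ccontr)
      assume "\<not> h a"
      then obtain b where "b \<in> B_F n F" "\<forall>i<length F. a ! i \<longrightarrow> flip b ! i"
        unfolding h_def by blast
      moreover from this(1) obtain \<beta> where "b = unsat_vec (X2 n) F \<beta>" unfolding B_F_def by blast
      ultimately have "\<forall>j<length F. unsat_vec (X1 n) F \<alpha> ! j \<longrightarrow> flip (unsat_vec (X2 n) F \<beta>) ! j"
        using a by simp
      then have "satisfiable F" using key[OF assms] by blast
      then show False using ns by blast
    qed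
  qed
  moreover have "\<forall>b\<in>B_F n F. \<not> h (flip b)"
    unfolding h_def by blast
  ultimately show "\<exists>h. monotone_on_cube (length F) h \<and> (\<forall>a\<in>A_F n F. h a) \<and> (\<forall>b\<in>B_F n F. \<not> h (flip b))"
    by blast
next
  assume "\<exists>h. monotone_on_cube (length F) h \<and> (\<forall>a\<in>A_F n F. h a) \<and> (\<forall>b\<in>B_F n F. \<not> h (flip b))"
  then obtain h where m: "monotone_on_cube (length F) h" and A: "\<forall>a\<in>A_F n F. h a"
    and B: "\<forall>b\<in>B_F n F. \<not> h (flip b)" by blast
  show "\<not> satisfiable F"
  proof
    assume "satisfiable F"
    then obtain \<alpha> \<beta> where ab: "\<forall>j<length F. unsat_vec (X1 n) F \<alpha> ! j \<longrightarrow> flip (unsat_vec (X2 n) F \<beta>) ! j"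
      using key[OF assms] by blast
    let ?u = "flip (unsat_vec (X2 n) F \<beta>)"
    let ?v = "unsat_vec (X1 n) F \<alpha>"
    have lu: "length ?u = length F" by (simp add: flip_def)
    have lv: "length ?v = length F" by simp
    have "\<forall>i<length F. ?v ! i \<le> ?u ! i" using ab by (simp add: le_bool_def)
    then have "h ?v \<le> h ?u"
      using m lu lv unfolding monotone_on_cube_def by blast
    moreover have "h ?v" using A unfolding A_F_def by blast
    moreover have "\<not> h ?u" using B unfolding B_F_def by blast
    ultimately show False by (simp add: le_bool_def)
  qed
qed

end
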